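(* Let $0<p<\infty$ and let $w$ be a weight on $(0,\infty)$. Then $w\in B^*_\infty$ if and only if there is $C>0$ such that $\|Qf\|_{L^{p,\infty}(w)}\le C\|f\|_{L^{p,\infty}(w)}$ for every nonnegative decreasing function $f$ on $(0,\infty)$, where $Qf(t)=\int_t^\infty f(s)\frac{ds}{s}$.
   Context: A weight $w$ on $(0,\infty)$ is a positive locally integrable function, $W(t)=\int_0^tw$. $w\in B^*_\infty$ means: there is $C>0$ with $\int_0^r\frac{W(t)}{t}\,dt\le CW(r)$ for all $r>0$. For measurable $g$ on $(0,\infty)$, $\|g\|_{L^{p,\infty}(w)}=\sup_{\lambda>0}\lambda\left(\int_{\{t:|g(t)|>\lambda\}}w(t)\,dt\right)^{1/p}$. *)

theory Defs
  imports "HOL-Analysis.Analysis"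
begin

definition epowr :: "ennreal \<Rightarrow> real \<Rightarrow> ennreal" where
  "epowr x a = (if x = \<infinity> then \<infinity> else ennreal (enn2real x powr a))"

definition Wfun :: "(real \<Rightarrow> real) \<Rightarrow> real \<Rightarrow> ennreal" where
  "Wfun w t = (\<integral>\<^sup>+ x. indicator {0<..<t} x * ennreal (w x) \<partial>lborel)"

text \<open>A weight on (0,infinity): measurable, positive, and locally integrable
  (integrable on every (0,t), so that W is finite).\<close>
definition weight :: "(real \<Rightarrow> real) \<Rightarrow> bool" where
  "weight w \<longleftrightarrow> set_borel_measurable lborel {0<..} w
     \<and> (\<forall>t>0. w t > 0) \<and> (\<forall>t>0. Wfun w t < \<infinity>)"

definition B_star_inf :: "(real \<Rightarrow> real) \<Rightarrow> bool" where
  "B_star_inf w \<longleftrightarrow> (\<exists>C>0. \<forall>r>0.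
     (\<integral>\<^sup>+ t. indicator {0<..<r} t * Wfun w t * ennreal (1 / t) \<partial>lborel)
       \<le> ennreal C * Wfun w r)"

definition wmeas :: "(real \<Rightarrow> real) \<Rightarrow> real set \<Rightarrow> ennreal" where
  "wmeas w A = (\<integral>\<^sup>+ x. indicator (A \<inter> {0<..}) x * ennreal (w x) \<partial>lborel)"

text \<open>Weak L^{p,infinity}(w) quasi-norm of a function on (0,infinity) with values in [0,infinity]
  (apply it to the absolute value of a real function).\<close>
definition wnorm :: "real \<Rightarrow> (real \<Rightarrow> real) \<Rightarrow> (real \<Rightarrow> ennreal) \<Rightarrow> ennreal" where
  "wnorm p w g = (SUP lam\<in>{0<..}. ennreal lam * epowr (wmeas w {t. 0 < t \<and> ennreal lam < g t}) (1 / p))"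

definition Qop :: "(real \<Rightarrow> real) \<Rightarrow> real \<Rightarrow> ennreal" where
  "Qop f t = (\<integral>\<^sup>+ s. indicator {t<..} s * ennreal (f s / s) \<partial>lborel)"

end

theory Submission
  imports Defs
begin


lemma I1:
  assumes "0 < s" "s \<le> r"
  shows "(\<integral>\<^sup>+ t. indicator {s<..<r} t * ennreal (1/t) \<partial>lborel) = ennreal (ln r - ln s)"
proof -
  have "((\<lambda>t. 1/t) has_integral (ln r - ln s)) {s..r}"
  proof (rule fundamental_theorem_of_calculus[OF assms(2)])
    fix x assume "x \<in> {s..r}"
    then have "x > 0" using assms by auto
    then show "(ln has_vector_derivative 1/x) (at x within {s..r})"
      by (auto intro!: derivative_eq_intros simp: has_real_derivative_iff_has_vector_derivative[symmetric])
  qed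
  then have "((\<lambda>t. 1/t) has_integral (ln r - ln s)) {s<..<r}"
    using has_integral_open_interval[of _ _ s r] by (simp only: box_real cbox_interval) blast
  from nn_integral_has_integral_lebesgue[OF _ this] assms have
    "(\<integral>\<^sup>+ t. ennreal (indicator {s<..<r} t * (1/t)) \<partial>lborel) = ln r - ln s" by simp
  moreover have "(\<integral>\<^sup>+ t. ennreal (indicator {s<..<r} t * (1/t)) \<partial>lborel) =
     (\<integral>\<^sup>+ t. indicator {s<..<r} t * ennreal (1/t) \<partial>lborel)"
    by (intro nn_integral_cong) (auto simp: indicator_def)
  ultimately show ?thesis by simp
qed

lemma I2:
  assumes "0 < d" "0 < r"
  shows "(\<integral>\<^sup>+ t. indicator {0<..<r} t * ennreal (t powr (d-1)) \<partial>lborel) \<le> ennreal (r powr d / d)"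
proof -
  have "((\<lambda>t. t powr (d-1)) has_integral (r powr d / d)) {0..r}"
    using has_integral_powr_from_0[of "d-1" r] assms by simp
  then have "((\<lambda>t. t powr (d-1)) has_integral (r powr d / d)) {0<..<r}"
    using has_integral_open_interval[of _ _ 0 r] by (simp only: box_real cbox_interval) blast
  from nn_integral_has_integral_lebesgue[OF _ this] assms have
    "(\<integral>\<^sup>+ t. ennreal (indicator {0<..<r} t * t powr (d-1)) \<partial>lborel) = r powr d / d" by simp
  then show ?thesis
    by (simp add: ennreal_mult' ennreal_indicator)
qed

lemma I3:
  assumes "0 < e" "0 < t"
  shows "(\<integral>\<^sup>+ s. indicator {t<..} s * ennreal (s powr (-e-1)) \<partial>lborel) \<le> ennreal (t powr (-e) / e)"
proof -
  have "((\<lambda>s. s powr (-e-1)) has_integral (t powr (-e) / e)) {t..}"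
    using has_integral_powr_to_inf[of "-e-1" t] assms by simp
  from nn_integral_has_integral_lebesgue[OF _ this] assms have
    "(\<integral>\<^sup>+ s. ennreal (indicator {t..} s * s powr (-e-1)) \<partial>lborel) = t powr (-e) / e" by simp
  moreover have "(\<integral>\<^sup>+ s. indicator {t<..} s * ennreal (s powr (-e-1)) \<partial>lborel)
     \<le> (\<integral>\<^sup>+ s. ennreal (indicator {t..} s * s powr (-e-1)) \<partial>lborel)"
    by (intro nn_integral_mono) (auto simp: indicator_def)
  ultimately show ?thesis by simp
qed

lemma meas_w:
  assumes "weight w" "A \<subseteq> {0<..}" "A \<in> sets borel"
  shows "(\<lambda>x. indicator A x * ennreal (w x)) \<in> borel_measurable lborel"
proof -
  have m: "(\<lambda>x. indicator {0<..} x *\<^sub>R w x) \<in> borel_measurable lborel"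
    using assms(1) unfolding weight_def set_borel_measurable_def by simp
  have "(\<lambda>x. indicator A x * ennreal (indicator {0<..} x *\<^sub>R w x)) \<in> borel_measurable lborel"
    using m assms(3) by measurable
  moreover have "(\<lambda>x. indicator A x * ennreal (indicator {0<..} x *\<^sub>R w x)) = (\<lambda>x. indicator A x * ennreal (w x))"
    using assms(2) by (auto simp: indicator_def fun_eq_iff)
  ultimately show ?thesis by simp
qed

lemma W_mono: "s \<le> t \<Longrightarrow> Wfun w s \<le> Wfun w t"
  unfolding Wfun_def by (intro nn_integral_mono) (auto simp: indicator_def intro!: mult_right_mono)

lemma W_nonpos: "t \<le> 0 \<Longrightarrow> Wfun w t = 0"
  unfolding Wfun_def by (auto simp: indicator_def)

lemma W_fin: "weight w \<Longrightarrow> Wfun w t < \<infinity>"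
  by (cases "t > 0") (auto simp: weight_def W_nonpos)

lemma W_pos:
  assumes "weight w" "0 < t"
  shows "0 < Wfun w t"
proof (rule ccontr)
  assume "\<not> 0 < Wfun w t"
  then have "Wfun w t = 0" by (simp add: order.strict_iff_not zero_less_iff_neq_zero)
  moreover have "(\<lambda>x. indicator {0<..<t} x * ennreal (w x)) \<in> borel_measurable lborel"
    by (rule meas_w[OF assms(1)]) auto
  ultimately have "AE x in lborel. indicator {0<..<t} x * ennreal (w x) = 0"
    using nn_integral_0_iff_AE unfolding Wfun_def by blast
  moreover have "indicator {0<..<t} x * ennreal (w x) \<noteq> 0" if "x \<in> {0<..<t}" for x
    using that assms(1) by (auto simp: weight_def)
  ultimately have "AE x in lborel. x \<notin> {0<..<t}"
    by (auto elim!: AE_mp)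
  moreover have "{x \<in> space lborel. \<not> (x \<notin> {0<..<t})} = {0<..<t}" by auto
  ultimately have "emeasure lborel {0<..<t} = 0"
    using AE_iff_measurable[of "{0<..<t}" lborel "\<lambda>x. x \<notin> {0<..<t}"] by simp
  then show False using assms(2) by simp
qed

lemma wmeas_mono: "A \<subseteq> B \<Longrightarrow> wmeas w A \<le> wmeas w B"
  unfolding wmeas_def by (intro nn_integral_mono) (auto simp: indicator_def)

lemma wmeas_Ioo: "wmeas w {0<..<t} = Wfun w t"
  unfolding wmeas_def Wfun_def by (intro nn_integral_cong) (auto simp: indicator_def)

lemma wmeas_Ioc: "wmeas w {0<..t} = Wfun w t"
  unfolding wmeas_def Wfun_def
  by (intro nn_integral_cong_AE) (use AE_lborel_singleton[of t] in \<open>auto simp: indicator_def elim!: AE_mp\<close>)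

lemma wmeas_seq:
  assumes "weight w" "T \<subseteq> (\<Union>n. {0<..<t n})" "incseq t" "\<And>n. Wfun w (t n) \<le> c"
  shows "wmeas w T \<le> c"
proof -
  have "wmeas w T \<le> (\<integral>\<^sup>+ x. (SUP n. indicator {0<..<t n} x * ennreal (w x)) \<partial>lborel)"
    unfolding wmeas_def
  proof (intro nn_integral_mono)
    fix x show "indicator (T \<inter> {0<..}) x * ennreal (w x) \<le> (SUP n. indicator {0<..<t n} x * ennreal (w x))"
    proof (cases "x \<in> T")
      case True
      then obtain n where "x \<in> {0<..<t n}" using assms(2) by blast
      then have "indicator (T \<inter> {0<..}) x * ennreal (w x) = indicator {0<..<t n} x * ennreal (w x)"
        using True by (auto simp: indicator_def)
      then show ?thesis by (metis SUP_upper UNIV_I)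
    next
      case False then show ?thesis by (simp add: indicator_def)
    qed
  qed
  also have "\<dots> = (SUP n. Wfun w (t n))"
    unfolding Wfun_def
  proof (rule nn_integral_monotone_convergence_SUP)
    show "incseq (\<lambda>n x. indicator {0<..<t n} x * ennreal (w x))"
      using assms(3) unfolding incseq_def le_fun_def indicator_def by (auto dest: less_le_trans)
  qed (intro meas_w[OF assms(1)]; auto)
  also have "\<dots> \<le> c" using assms(4) by (simp add: SUP_le_iff)
  finally show ?thesis .
qed

lemma wmeas_downset:
  assumes w: "weight w" and T: "\<And>x y. x \<in> T \<Longrightarrow> 0 < y \<Longrightarrow> y \<le> x \<Longrightarrow> y \<in> T"
    and Tpos: "\<And>x. x \<in> T \<Longrightarrow> 0 < x" and c: "\<And>x. x \<in> T \<Longrightarrow> Wfun w x \<le> c"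
  shows "wmeas w T \<le> c"
proof (cases "T = {}")
  case True then show ?thesis by (simp add: wmeas_def)
next
  case ne: False
  show ?thesis
  proof (cases "bdd_above T")
    case False
    have Tall: "x \<in> T" if "x > 0" for x
    proof -
      obtain y where "y \<in> T" "x < y" using False that by (meson bdd_above.I linorder_not_le)
      then show ?thesis using T that by auto
    qed
    show ?thesis
    proof (rule wmeas_seq[OF w, of _ "\<lambda>n. real n"])
      show "T \<subseteq> (\<Union>n. {0<..<real n})" using Tpos
        by (auto dest!: Tpos) (meson real_arch_simple  less_le_not_le reals_Archimedean2)
      show "incseq (\<lambda>n. real n)" by (simp add: incseq_def)
      fix n show "Wfun w (real n) \<le> c"
        by (cases "n = 0") (auto simp: W_nonpos intro!: c Tall)
    qed
  next
    case bdd: True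
    define b where "b = Sup T"
    have xb: "x \<le> b" if "x \<in> T" for x using bdd that unfolding b_def by (simp add: cSup_upper)
    have bpos: "0 < b" using ne xb Tpos by (meson all_not_in_conv less_le_trans)
    show ?thesis
    proof (cases "b \<in> T")
      case True
      have "wmeas w T \<le> wmeas w {0<..b}" using xb Tpos by (intro wmeas_mono) auto
      also have "\<dots> = Wfun w b" by (rule wmeas_Ioc)
      finally show ?thesis using c True by (meson order.trans)
    next
      case False
      have inT: "b - b / real (Suc (Suc n)) \<in> T" for n
      proof -
        have "b / real (Suc (Suc n)) > 0" using bpos by simp
        then obtain y where "y \<in> T" "b - b / real (Suc (Suc n)) < y"
          using less_cSupE[of "b - b / real (Suc (Suc n))" T] ne unfolding b_def by auto
        moreover have "b / real (Suc (Suc n)) < b" using bpos by (simp add: divide_less_eq)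
        ultimately show ?thesis using T[of y "b - b / real (Suc (Suc n))"] by auto
      qed
      show ?thesis
      proof (rule wmeas_seq[OF w, of _ "\<lambda>n. b - b / real (Suc (Suc n))"])
        show "T \<subseteq> (\<Union>n. {0<..<b - b / real (Suc (Suc n))})"
        proof
          fix x assume x: "x \<in> T"
          then have "x < b" using xb[OF x] False by (cases "x = b") auto
          then obtain n where "b / real (Suc (Suc n)) < b - x" 
          proof -
            obtain n :: nat where "b / (b - x) < real n" using reals_Archimedean2 by blast
            then have "b < real (Suc (Suc n)) * (b - x)" using \<open>x < b\<close>
              by (simp add: divide_less_eq algebra_simps)
            then show ?thesis using that[of n] by (simp add: divide_less_eq mult.commute)
          qed
          then show "x \<in> (\<Union>n. {0<..<b - b / real (Suc (Suc n))})" using Tpos[OF x] by (intro UN_I[of n]) auto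
        qed
        show "incseq (\<lambda>n. b - b / real (Suc (Suc n)))"
          using bpos by (auto simp: incseq_def intro!: divide_left_mono)
        fix n show "Wfun w (b - b / real (Suc (Suc n))) \<le> c" using c inT by blast
      qed
    qed
  qed
qed

definition V :: "(real \<Rightarrow> real) \<Rightarrow> real \<Rightarrow> real" where "V w t = enn2real (Wfun w t)"

lemma H_iter:
  assumes mono: "\<And>s t. s \<le> t \<Longrightarrow> V w s \<le> V w t" and q: "0 < q" and H: "\<And>r. r > 0 \<Longrightarrow> V w (q*r) \<le> V w r / 2"
  shows "r > 0 \<Longrightarrow> V w (q^n * r) \<le> V w r / 2^n"
proof (induction n arbitrary: r)
  case 0 then show ?case by simp
next
  case (Suc n)
  have "V w (q^Suc n * r) = V w (q * (q^n * r))" by (simp add: mult.assoc)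
  also have "\<dots> \<le> V w (q^n*r) / 2" using H Suc q by simp
  also have "\<dots> \<le> V w r / 2^n / 2" using Suc by simp
  finally show ?case by simp
qed

lemma H_decay:
  assumes mono: "\<And>s t. s \<le> t \<Longrightarrow> V w s \<le> V w t" and q: "0 < q" "q < 1"
    and H: "\<And>r. r > 0 \<Longrightarrow> V w (q*r) \<le> V w r / 2" and Vnn: "\<And>t. V w t \<ge> 0"
    and s: "0 < s" "s \<le> r"
  shows "V w s \<le> 2 * (s/r) powr (ln 2 / (- ln q)) * V w r"
proof -
  define L where "L = - ln q"
  have L: "L > 0" using q by (simp add: L_def)
  define x where "x = ln (r/s) / L"
  have x0: "x \<ge> 0" using s L by (simp add: x_def)
  define n where "n = nat \<lfloor>x\<rfloor>"
  have nx: "real n \<le> x" "x < real n + 1" using x0 unfolding n_def by linarith+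
  have qn: "q^n = exp (- real n * L)" using q by (simp add: L_def exp_of_nat_mult)
  have "s / r = exp (- x * L)" using s L by (simp add: x_def ln_div exp_diff)
  also have "\<dots> \<le> q^n" unfolding qn using nx L by (simp add: mult_right_mono)
  finally have "s \<le> q^n * r" using s by (simp add: divide_le_eq)
  then have "V w s \<le> V w (q^n * r)" by (rule mono)
  also have "\<dots> \<le> V w r / 2^n" using H_iter[OF mono q(1) H] s by simp
  also have "\<dots> \<le> 2 * (s/r) powr (ln 2 / (- ln q)) * V w r"
  proof -
    define e where "e = (s/r) powr (ln 2 / (- ln q))"
    have "e = exp (- (x * ln 2))"
      using s L unfolding e_def by (simp add: powr_def x_def L_def ln_div field_simps)
    moreover have "x * ln 2 \<le> real (Suc n) * ln 2" using nx by (intro mult_right_mono) auto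
    ultimately have "e \<ge> exp (- (real (Suc n) * ln 2))" by simp
    moreover have A: "exp (real (Suc n) * ln 2) = 2 ^ Suc n"
      using exp_of_nat_mult[of "Suc n" "ln (2::real)"] by simp
    ultimately have "e \<ge> inverse (2 ^ Suc n)" by (simp only: exp_minus A)
    then have le: "2 * inverse (2 ^ Suc n) \<le> 2 * e" by simp
    have "1 / (2::real)^n = 2 * inverse (2 ^ Suc n)" by (simp add: inverse_eq_divide)
    also note le
    finally have le2: "1 / 2^n \<le> 2 * e" .
    have "V w r / 2^n = V w r * (1 / 2^n)" by simp
    also have "\<dots> \<le> V w r * (2 * e)"
      using Vnn le2 by (intro mult_left_mono) auto
    also have "\<dots> = 2 * e * V w r" by (rule mult.commute)
    finally show ?thesis unfolding e_def .
  qed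
  finally show ?thesis .
qed


lemma W_V: "weight w \<Longrightarrow> Wfun w t = ennreal (V w t)"
  unfolding V_def using W_fin[of w t] by (simp add: less_top ennreal_enn2real)

lemma V_nonneg: "V w t \<ge> 0" by (simp add: V_def)

lemma V_mono: "weight w \<Longrightarrow> s \<le> t \<Longrightarrow> V w s \<le> V w t"
  using W_mono[of s t w] W_V[of w] V_nonneg[of w t] by (simp add: ennreal_le_iff)

lemma V_pos: "weight w \<Longrightarrow> 0 < t \<Longrightarrow> 0 < V w t"
  using W_pos[of w t] W_V[of w t] by simp

lemma epowr_ennreal: "x \<ge> 0 \<Longrightarrow> epowr (ennreal x) a = ennreal (x powr a)"
  by (simp add: epowr_def)

lemma epowr_mono: "x \<le> y \<Longrightarrow> 0 < a \<Longrightarrow> epowr x a \<le> epowr y a"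
  by (cases x; cases y) (auto simp: epowr_def top_unique intro!: ennreal_leI powr_mono2)


lemma B_H:
  assumes w: "weight w" and B: "B_star_inf w"
  shows "\<exists>q. 0 < q \<and> q < 1 \<and> (\<forall>r>0. V w (q*r) \<le> V w r / 2)"
proof -
  obtain C where C: "C > 0" and HC: "\<And>r. r > 0 \<Longrightarrow>
     (\<integral>\<^sup>+ t. indicator {0<..<r} t * Wfun w t * ennreal (1 / t) \<partial>lborel) \<le> ennreal C * Wfun w r"
    using B unfolding B_star_inf_def by blast
  define q where "q = exp (- (2*C))"
  have q: "0 < q" "q < 1" using C by (auto simp: q_def)
  have "V w (q*r) \<le> V w r / 2" if r: "r > 0" for r
  proof -
    define s where "s = q * r"
    have s: "0 < s" "s \<le> r" using q r by (auto simp: s_def)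
    have lns: "ln r - ln s = 2 * C" using q r by (simp add: s_def q_def ln_mult)
    have "ennreal (V w s) * ennreal (2 * C) = Wfun w s * (\<integral>\<^sup>+ t. indicator {s<..<r} t * ennreal (1/t) \<partial>lborel)"
      using I1[OF s] lns W_V[OF w] by simp
    also have "\<dots> = (\<integral>\<^sup>+ t. Wfun w s * (indicator {s<..<r} t * ennreal (1/t)) \<partial>lborel)"
      by (rule nn_integral_cmult[symmetric]) measurable
    also have "\<dots> \<le> (\<integral>\<^sup>+ t. indicator {0<..<r} t * Wfun w t * ennreal (1 / t) \<partial>lborel)"
    proof (intro nn_integral_mono)
      fix t show "Wfun w s * (indicator {s<..<r} t * ennreal (1/t)) \<le> indicator {0<..<r} t * Wfun w t * ennreal (1 / t)"
        using s W_mono[of s t w] by (auto simp: indicator_def intro!: mult_right_mono)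
    qed
    also have "\<dots> \<le> ennreal C * Wfun w r" by (rule HC[OF r])
    also have "\<dots> = ennreal (C * V w r)" using W_V[OF w] C V_nonneg[of w r] by (simp add: ennreal_mult)
    finally have "ennreal (V w s * (2 * C)) \<le> ennreal (C * V w r)"
      using C V_nonneg[of w s] by (simp add: ennreal_mult)
    then have "V w s * (2 * C) \<le> C * V w r"
      using C V_nonneg[of w r] by (simp add: ennreal_le_iff)
    then show ?thesis using C unfolding s_def by (simp add: field_simps)
  qed
  then show ?thesis using q by blast
qed

lemma D_B:
  assumes w: "weight w" and d: "0 < d"
    and D: "\<And>s r. 0 < s \<Longrightarrow> s \<le> r \<Longrightarrow> V w s \<le> 2 * (s/r) powr d * V w r"
  shows "B_star_inf w"
  unfolding B_star_inf_def
proof (intro exI[of _ "2/d"] conjI allI impI)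
  show "0 < 2/d" using d by simp
  fix r :: real assume r: "0 < r"
  define K where "K = 2 * V w r / r powr d"
  have K: "K \<ge> 0" using V_nonneg[of w r] by (simp add: K_def)
  have "(\<integral>\<^sup>+ t. indicator {0<..<r} t * Wfun w t * ennreal (1 / t) \<partial>lborel)
     \<le> (\<integral>\<^sup>+ t. ennreal K * (indicator {0<..<r} t * ennreal (t powr (d-1))) \<partial>lborel)"
  proof (intro nn_integral_mono)
    fix t
    show "indicator {0<..<r} t * Wfun w t * ennreal (1 / t) \<le> ennreal K * (indicator {0<..<r} t * ennreal (t powr (d-1)))"
    proof (cases "t \<in> {0<..<r}")
      case True
      then have t: "0 < t" "t \<le> r" by auto
      have "V w t * (1/t) \<le> 2 * (t/r) powr d * V w r * (1/t)"
        using D[OF t] t by (intro mult_right_mono) auto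
      also have "\<dots> = K * t powr (d-1)"
        using t r by (simp add: K_def powr_divide powr_diff field_simps)
      finally have "V w t * (1/t) \<le> K * t powr (d-1)" .
      then show ?thesis using True W_V[OF w] t K V_nonneg[of w t]
        by (simp add: ennreal_mult[symmetric] ennreal_leI)
    qed simp
  qed
  also have "\<dots> = ennreal K * (\<integral>\<^sup>+ t. indicator {0<..<r} t * ennreal (t powr (d-1)) \<partial>lborel)"
    by (rule nn_integral_cmult) measurable
  also have "\<dots> \<le> ennreal K * ennreal (r powr d / d)"
    by (intro mult_left_mono I2[OF d r]) auto
  also have "\<dots> = ennreal (2/d) * Wfun w r"
    using K d r W_V[OF w] by (simp add: ennreal_mult[symmetric] K_def field_simps)
  finally show "(\<integral>\<^sup>+ t. indicator {0<..<r} t * Wfun w t * ennreal (1 / t) \<partial>lborel) \<le> ennreal (2/d) * Wfun w r" .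
qed


lemma WT_H:
  assumes w: "weight w" and p: "0 < p" and C: "C > 0"
    and WT: "\<forall>f :: real \<Rightarrow> real.
       (\<forall>t>0. 0 \<le> f t) \<and> (\<forall>s t. 0 < s \<longrightarrow> s \<le> t \<longrightarrow> f t \<le> f s) \<longrightarrow>
       wnorm p w (Qop f) \<le> ennreal C * wnorm p w (\<lambda>t. ennreal \<bar>f t\<bar>)"
  shows "\<exists>q. 0 < q \<and> q < 1 \<and> (\<forall>r>0. V w (q*r) \<le> V w r / 2)"
proof -
  define lam where "lam = C * 2 powr (1/p)"
  have lam: "lam > 0" using C by (simp add: lam_def)
  define q where "q = exp (- lam)"
  have q: "0 < q" "q < 1" using lam by (auto simp: q_def)
  have "V w (q*r) \<le> V w r / 2" if r: "r > 0" for r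
  proof -
    define f :: "real \<Rightarrow> real" where "f t = (if 0 < t \<and> t \<le> r then 1 else 0)" for t
    have fprop: "(\<forall>t>0. 0 \<le> f t) \<and> (\<forall>s t. 0 < s \<longrightarrow> s \<le> t \<longrightarrow> f t \<le> f s)"
      by (auto simp: f_def)
    have n1: "wnorm p w (\<lambda>t. ennreal \<bar>f t\<bar>) \<le> ennreal (V w r powr (1/p))"
      unfolding wnorm_def
    proof (intro SUP_least)
      fix l :: real assume l: "l \<in> {0<..}"
      show "ennreal l * epowr (wmeas w {t. 0 < t \<and> ennreal l < ennreal \<bar>f t\<bar>}) (1 / p) \<le> ennreal (V w r powr (1/p))"
      proof (cases "l < 1")
        case True
        then have "{t. 0 < t \<and> ennreal l < ennreal \<bar>f t\<bar>} = {0<..r}"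
          using l by (auto simp: f_def)
        then have "epowr (wmeas w {t. 0 < t \<and> ennreal l < ennreal \<bar>f t\<bar>}) (1 / p) = ennreal (V w r powr (1/p))"
          using wmeas_Ioc W_V[OF w] V_nonneg by (simp add: epowr_ennreal)
        moreover have "ennreal l * ennreal (V w r powr (1/p)) \<le> ennreal (V w r powr (1/p))"
          using True l by (simp add: ennreal_mult[symmetric] mult_left_le_one_le ennreal_leI)
        ultimately show ?thesis by simp
      next
        case False
        then have e: "{t. 0 < t \<and> ennreal l < ennreal \<bar>f t\<bar>} = {}"
          using l by (auto simp: f_def ennreal_less_iff)
        have "wmeas w {t. 0 < t \<and> ennreal l < ennreal \<bar>f t\<bar>} = 0"
          unfolding e by (simp add: wmeas_def)
        then show ?thesis using p by (simp add: epowr_def)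
      qed
    qed
    have n2: "ennreal lam * ennreal (V w (q*r) powr (1/p)) \<le> wnorm p w (Qop f)"
    proof -
      have sub: "{0<..<q*r} \<subseteq> {t. 0 < t \<and> ennreal lam < Qop f t}"
      proof safe
        fix t assume t: "t \<in> {0<..<q*r}"
        have "q * r < r" using q r by simp
        then have t0: "0 < t" "t \<le> r" using t by auto
        have "ln t < ln (q * r)" using t by auto
        then have "lam < ln r - ln t" using q r by (simp add: ln_mult q_def)
        then have "ennreal lam < ennreal (ln r - ln t)" using lam by (simp add: ennreal_less_iff)
        also have "\<dots> = (\<integral>\<^sup>+ s. indicator {t<..<r} s * ennreal (1/s) \<partial>lborel)"
          using I1[OF t0] by simp
        also have "\<dots> \<le> Qop f t" unfolding Qop_def
          using t0 by (intro nn_integral_mono) (auto simp: indicator_def f_def)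
        finally show "ennreal lam < Qop f t" .
        show "0 < t" using t0 by simp
      qed
      have "ennreal (V w (q*r) powr (1/p)) = epowr (wmeas w {0<..<q*r}) (1/p)"
        using wmeas_Ioo W_V[OF w] V_nonneg by (simp add: epowr_ennreal)
      also have "\<dots> \<le> epowr (wmeas w {t. 0 < t \<and> ennreal lam < Qop f t}) (1/p)"
        using p by (intro epowr_mono wmeas_mono sub) auto
      finally have "ennreal lam * ennreal (V w (q*r) powr (1/p))
          \<le> ennreal lam * epowr (wmeas w {t. 0 < t \<and> ennreal lam < Qop f t}) (1/p)"
        by (intro mult_left_mono) auto
      also have "\<dots> \<le> wnorm p w (Qop f)"
        unfolding wnorm_def using lam by (intro SUP_upper) auto
      finally show ?thesis .
    qed
    have "ennreal lam * ennreal (V w (q*r) powr (1/p)) \<le> wnorm p w (Qop f)" by (rule n2)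
    also have "\<dots> \<le> ennreal C * wnorm p w (\<lambda>t. ennreal \<bar>f t\<bar>)"
      using WT fprop by blast
    also have "\<dots> \<le> ennreal C * ennreal (V w r powr (1/p))"
      by (intro mult_left_mono n1) auto
    finally have "ennreal (lam * V w (q*r) powr (1/p)) \<le> ennreal (C * V w r powr (1/p))"
      using lam C by (simp add: ennreal_mult)
    then have "lam * V w (q*r) powr (1/p) \<le> C * V w r powr (1/p)"
      using C by (simp add: ennreal_le_iff)
    then have "C * (2 powr (1/p) * V w (q*r) powr (1/p)) \<le> C * V w r powr (1/p)"
      by (simp add: lam_def mult.assoc)
    then have "2 powr (1/p) * V w (q*r) powr (1/p) \<le> V w r powr (1/p)"
      using C by simp
    then have "V w (q*r) powr (1/p) \<le> V w r powr (1/p) / 2 powr (1/p)"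
      by (simp add: pos_le_divide_eq mult.commute)
    also have "\<dots> = (V w r / 2) powr (1/p)"
      using V_nonneg[of w r] by (simp add: powr_divide)
    finally have h: "V w (q*r) powr (1/p) \<le> (V w r / 2) powr (1/p)" .
    have "(V w (q*r) powr (1/p)) powr p \<le> ((V w r / 2) powr (1/p)) powr p"
      by (rule powr_mono2[OF _ _ h]) (use p in auto)
    then show ?thesis using p V_nonneg[of w r] V_nonneg[of w "q*r"] by (simp add: powr_powr)
  qed
  then show ?thesis using q by blast
qed


lemma dense_aux:
  fixes X a b :: real
  assumes "a \<ge> 0" "X \<ge> 0" "\<And>l. 0 < l \<Longrightarrow> l < b \<Longrightarrow> l * X \<le> a"
  shows "b * X \<le> a"
proof (rule ccontr)
  assume "\<not> b * X \<le> a"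
  then have bX: "b * X > a" by simp
  then have X: "X > 0" using assms by (metis less_eq_real_def mult_zero_right not_le)
  then have b: "b > a / X" using bX by (simp add: pos_divide_less_eq)
  define z where "z = a / X"
  define l where "l = (z + b) / 2"
  have "z \<ge> 0" using assms X by (simp add: z_def)
  then have "0 < l" "l < b" "a / X < l" using b unfolding l_def z_def[symmetric] by auto
  then have "l * X > a" using X by (simp add: pos_divide_less_eq)
  then show False using assms(3)[OF \<open>0 < l\<close> \<open>l < b\<close>] by simp
qed

lemma f_bound:
  assumes w: "weight w" and p: "0 < p"
    and f0: "\<forall>t>0. 0 \<le> f t" and fm: "\<forall>s t. 0 < s \<longrightarrow> s \<le> t \<longrightarrow> f t \<le> f s"
    and A: "wnorm p w (\<lambda>t. ennreal \<bar>f t\<bar>) = ennreal a" and a: "a \<ge> 0"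
    and t: "0 < t"
  shows "f t * V w t powr (1/p) \<le> a"
proof (rule dense_aux[OF a])
  show "0 \<le> V w t powr (1/p)" by simp
  fix l assume l: "0 < l" "l < f t"
  have sub: "{0<..<t} \<subseteq> {u. 0 < u \<and> ennreal l < ennreal \<bar>f u\<bar>}"
  proof safe
    fix u assume u: "u \<in> {0<..<t}"
    then have "f t \<le> f u" using fm by auto
    then show "ennreal l < ennreal \<bar>f u\<bar>" using l by (simp add: ennreal_less_iff)
  qed auto
  have "ennreal (l * V w t powr (1/p)) = ennreal l * epowr (wmeas w {0<..<t}) (1/p)"
    using wmeas_Ioo W_V[OF w] V_nonneg[of w t] l by (simp add: epowr_ennreal ennreal_mult)
  also have "\<dots> \<le> ennreal l * epowr (wmeas w {u. 0 < u \<and> ennreal l < ennreal \<bar>f u\<bar>}) (1/p)"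
    using p by (intro mult_left_mono epowr_mono wmeas_mono sub) auto
  also have "\<dots> \<le> wnorm p w (\<lambda>t. ennreal \<bar>f t\<bar>)"
    unfolding wnorm_def using l by (intro SUP_upper) auto
  finally show "l * V w t powr (1/p) \<le> a" using A a by (simp add: ennreal_le_iff)
qed


lemma Q_bound:
  assumes w: "weight w" and p: "0 < p" and d: "0 < d"
    and D: "\<And>s r. 0 < s \<Longrightarrow> s \<le> r \<Longrightarrow> V w s \<le> 2 * (s/r) powr d * V w r"
    and fb: "\<And>t. 0 < t \<Longrightarrow> f t * V w t powr (1/p) \<le> a" and a: "a \<ge> 0"
    and t: "0 < t"
  shows "Qop f t \<le> ennreal (2 powr (1/p) * (p/d) * a / V w t powr (1/p))"
proof -
  define e where "e = d / p"
  have e: "e > 0" using d p by (simp add: e_def)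
  define X where "X = V w t powr (1/p)"
  have X: "X > 0" using V_pos[OF w t] by (simp add: X_def)
  define K where "K = a * 2 powr (1/p) * t powr e / X"
  have K: "K \<ge> 0" using a X by (simp add: K_def)
  have pt: "f s / s \<le> K * s powr (-e-1)" if s: "t < s" for s
  proof -
    have s0: "s > 0" using s t by simp
    define Y where "Y = V w s powr (1/p)"
    have Y: "Y > 0" using V_pos[OF w s0] by (simp add: Y_def)
    have "V w t \<le> 2 * (t/s) powr d * V w s" using D[of t s] s t by simp
    then have "X \<le> (2 * (t/s) powr d * V w s) powr (1/p)"
      unfolding X_def using p V_nonneg[of w t] by (intro powr_mono2) auto
    also have "\<dots> = 2 powr (1/p) * (t powr e / s powr e) * Y"
      using s0 t V_nonneg[of w s] unfolding Y_def e_def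
      by (simp add: powr_mult powr_powr powr_divide)
    finally have XY: "X \<le> 2 powr (1/p) * (t powr e / s powr e) * Y" .
    have fs: "f s * Y \<le> a" using fb[OF s0] by (simp add: Y_def)
    have "f s * X \<le> a * (2 powr (1/p) * (t powr e / s powr e))"
    proof (cases "f s \<ge> 0")
      case True
      have "f s * X \<le> f s * (2 powr (1/p) * (t powr e / s powr e) * Y)" using XY True by (rule mult_left_mono)
      also have "\<dots> = (f s * Y) * (2 powr (1/p) * (t powr e / s powr e))" by (simp add: mult_ac)
      also have "\<dots> \<le> a * (2 powr (1/p) * (t powr e / s powr e))"
        using fs by (intro mult_right_mono) auto
      finally show ?thesis .
    next
      case False
      then have "f s * X \<le> 0" using X by (simp add: mult_nonpos_nonneg)
      also have "0 \<le> a * (2 powr (1/p) * (t powr e / s powr e))" using a by simp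
      finally show ?thesis .
    qed
    then have "f s \<le> a * (2 powr (1/p) * (t powr e / s powr e)) / X"
      by (subst pos_le_divide_eq[OF X])
    also have "\<dots> = K * s powr (-e)"
      by (simp add: K_def powr_minus divide_inverse mult_ac)
    finally have "f s / s \<le> K * s powr (-e) / s" using s0 by (simp add: divide_right_mono)
    also have "\<dots> = K * s powr (-e-1)" using s0 by (simp add: powr_diff powr_minus divide_inverse mult_ac)
    finally show ?thesis .
  qed
  have "Qop f t \<le> (\<integral>\<^sup>+ s. ennreal K * (indicator {t<..} s * ennreal (s powr (-e-1))) \<partial>lborel)"
    unfolding Qop_def
  proof (intro nn_integral_mono)
    fix s
    show "indicator {t<..} s * ennreal (f s / s) \<le> ennreal K * (indicator {t<..} s * ennreal (s powr (-e-1)))"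
      using pt[of s] K by (cases "t < s") (auto simp: ennreal_mult[symmetric] intro!: ennreal_leI)
  qed
  also have "\<dots> = ennreal K * (\<integral>\<^sup>+ s. indicator {t<..} s * ennreal (s powr (-e-1)) \<partial>lborel)"
    by (rule nn_integral_cmult) measurable
  also have "\<dots> \<le> ennreal K * ennreal (t powr (-e) / e)"
    by (intro mult_left_mono I3[OF e t]) auto
  also have "\<dots> = ennreal (K * (t powr (-e) / e))" using K e by (subst ennreal_mult) auto
  also have "K * (t powr (-e) / e) = 2 powr (1/p) * (p/d) * a / V w t powr (1/p)"
    using t e d p unfolding K_def X_def e_def by (simp add: powr_minus field_simps)
  finally show ?thesis .
qed


lemma D_WT:
  assumes w: "weight w" and p: "0 < p" and d: "0 < d"
    and D: "\<And>s r. 0 < s \<Longrightarrow> s \<le> r \<Longrightarrow> V w s \<le> 2 * (s/r) powr d * V w r"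
  shows "\<exists>C>0. \<forall>f :: real \<Rightarrow> real.
       (\<forall>t>0. 0 \<le> f t) \<and> (\<forall>s t. 0 < s \<longrightarrow> s \<le> t \<longrightarrow> f t \<le> f s) \<longrightarrow>
       wnorm p w (Qop f) \<le> ennreal C * wnorm p w (\<lambda>t. ennreal \<bar>f t\<bar>)"
proof (intro exI[of _ "2 powr (1/p) * (p/d)"] conjI allI impI)
  define M where "M = 2 powr (1/p) * (p/d)"
  have M: "M > 0" using p d by (simp add: M_def)
  show "0 < 2 powr (1/p) * (p/d)" using M by (simp add: M_def)
  fix f :: "real \<Rightarrow> real"
  assume "(\<forall>t>0. 0 \<le> f t) \<and> (\<forall>s t. 0 < s \<longrightarrow> s \<le> t \<longrightarrow> f t \<le> f s)"
  then have f0: "\<forall>t>0. 0 \<le> f t" and fm: "\<forall>s t. 0 < s \<longrightarrow> s \<le> t \<longrightarrow> f t \<le> f s" by auto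
  show "wnorm p w (Qop f) \<le> ennreal (2 powr (1/p) * (p/d)) * wnorm p w (\<lambda>t. ennreal \<bar>f t\<bar>)"
  proof (cases "wnorm p w (\<lambda>t. ennreal \<bar>f t\<bar>) = \<infinity>")
    case True
    then show ?thesis using M p d by (simp add: M_def ennreal_mult_top)
  next
    case False
    define a where "a = enn2real (wnorm p w (\<lambda>t. ennreal \<bar>f t\<bar>))"
    have A: "wnorm p w (\<lambda>t. ennreal \<bar>f t\<bar>) = ennreal a" and a: "a \<ge> 0"
      using False by (auto simp: a_def less_top ennreal_enn2real)
    have fb: "f t * V w t powr (1/p) \<le> a" if "0 < t" for t
      by (rule f_bound[OF w p f0 fm A a that])
    have Qb: "Qop f t \<le> ennreal (M * a / V w t powr (1/p))" if "0 < t" for t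
      using Q_bound[OF w p d D fb a that] by (simp add: M_def)
    have "wnorm p w (Qop f) \<le> ennreal (M * a)"
      unfolding wnorm_def
    proof (intro SUP_least)
      fix l :: real assume l: "l \<in> {0<..}"
      define c where "c = (M * a / l) powr p"
      define T where "T = {t. 0 < t \<and> l < M * a / V w t powr (1/p)}"
      have sub: "{t. 0 < t \<and> ennreal l < Qop f t} \<subseteq> T"
      proof safe
        fix t assume t: "0 < t" "ennreal l < Qop f t"
        then have "ennreal l < ennreal (M * a / V w t powr (1/p))" using Qb[OF t(1)] by simp
        then show "t \<in> T" using t l by (auto simp: T_def ennreal_less_iff)
      qed
      have "wmeas w T \<le> ennreal c"
      proof (rule wmeas_downset[OF w])
        fix x y assume x: "x \<in> T" and y: "0 < y" "y \<le> x"
        have "V w y powr (1/p) \<le> V w x powr (1/p)"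
          using V_mono[OF w y(2)] p V_nonneg[of w y] by (intro powr_mono2) auto
        moreover have "V w y powr (1/p) > 0" using V_pos[OF w y(1)] by simp
        moreover have "V w x powr (1/p) > 0" using V_pos[OF w, of x] y by simp
        ultimately have "M * a / V w x powr (1/p) \<le> M * a / V w y powr (1/p)"
          using M a by (intro divide_left_mono) auto
        then show "y \<in> T" using x y by (auto simp: T_def)
      next
        fix x assume "x \<in> T" then show "0 < x" by (simp add: T_def)
      next
        fix x assume x: "x \<in> T"
        then have x0: "x > 0" by (simp add: T_def)
        have Xp: "V w x powr (1/p) > 0" using V_pos[OF w x0] by simp
        have "l < M * a / V w x powr (1/p)" using x by (simp add: T_def)
        then have "V w x powr (1/p) < M * a / l" using l Xp by (simp add: field_simps)
        then have "(V w x powr (1/p)) powr p < (M * a / l) powr p"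
          using p Xp by (intro powr_less_mono2) auto
        then have "V w x < c" using p V_pos[OF w x0] by (simp add: powr_powr c_def)
        then show "Wfun w x \<le> ennreal c" using W_V[OF w] by (simp add: ennreal_leI)
      qed
      then have "wmeas w {t. 0 < t \<and> ennreal l < Qop f t} \<le> ennreal c"
        using wmeas_mono[OF sub] by (rule order.trans[rotated])
      then have "epowr (wmeas w {t. 0 < t \<and> ennreal l < Qop f t}) (1/p) \<le> epowr (ennreal c) (1/p)"
        using p by (intro epowr_mono) auto
      also have "\<dots> = ennreal (M * a / l)"
        using p M a l by (simp add: epowr_ennreal c_def powr_powr)
      finally have "ennreal l * epowr (wmeas w {t. 0 < t \<and> ennreal l < Qop f t}) (1/p) \<le> ennreal l * ennreal (M * a / l)"
        by (intro mult_left_mono) auto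
      also have "\<dots> = ennreal (M * a)"
        using l M a by (simp add: ennreal_mult[symmetric])
      finally show "ennreal l * epowr (wmeas w {t. 0 < t \<and> ennreal l < Qop f t}) (1/p) \<le> ennreal (M * a)" .
    qed
    also have "\<dots> = ennreal M * wnorm p w (\<lambda>t. ennreal \<bar>f t\<bar>)"
      using A M a by (simp add: ennreal_mult)
    finally show ?thesis by (simp add: M_def)
  qed
qed

theorem corollary2p5:
  fixes p :: real and w :: "real \<Rightarrow> real"
  assumes "0 < p" and "weight w"
  shows "B_star_inf w \<longleftrightarrow>
    (\<exists>C>0. \<forall>f :: real \<Rightarrow> real.
       (\<forall>t>0. 0 \<le> f t) \<and> (\<forall>s t. 0 < s \<longrightarrow> s \<le> t \<longrightarrow> f t \<le> f s) \<longrightarrow>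
       wnorm p w (Qop f) \<le> ennreal C * wnorm p w (\<lambda>t. ennreal \<bar>f t\<bar>))"
proof
  note w = assms(2) and p = assms(1)
  have decay: "\<exists>d>0. \<forall>s r. 0 < s \<longrightarrow> s \<le> r \<longrightarrow> V w s \<le> 2 * (s/r) powr d * V w r"
    if "0 < q" "q < 1" "\<forall>r>0. V w (q*r) \<le> V w r / 2" for q
  proof (intro exI[of _ "ln 2 / (- ln q)"] conjI allI impI)
    show "0 < ln 2 / (- ln q)" using that by (intro divide_pos_pos) auto
    fix s r :: real assume "0 < s" "s \<le> r"
    then show "V w s \<le> 2 * (s/r) powr (ln 2 / (- ln q)) * V w r"
      using H_decay[of w q s r] V_mono[OF w] V_nonneg[of w] that by blast
  qed
  {
    assume "B_star_inf w"
    then obtain q where "0 < q" "q < 1" "\<forall>r>0. V w (q*r) \<le> V w r / 2" using B_H[OF w] by blast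
    then obtain d where "d > 0" "\<forall>s r. 0 < s \<longrightarrow> s \<le> r \<longrightarrow> V w s \<le> 2 * (s/r) powr d * V w r"
      using decay by blast
    then show "\<exists>C>0. \<forall>f :: real \<Rightarrow> real.
       (\<forall>t>0. 0 \<le> f t) \<and> (\<forall>s t. 0 < s \<longrightarrow> s \<le> t \<longrightarrow> f t \<le> f s) \<longrightarrow>
       wnorm p w (Qop f) \<le> ennreal C * wnorm p w (\<lambda>t. ennreal \<bar>f t\<bar>)"
      using D_WT[OF w p] by blast
  next
    assume "\<exists>C>0. \<forall>f :: real \<Rightarrow> real.
       (\<forall>t>0. 0 \<le> f t) \<and> (\<forall>s t. 0 < s \<longrightarrow> s \<le> t \<longrightarrow> f t \<le> f s) \<longrightarrow>
       wnorm p w (Qop f) \<le> ennreal C * wnorm p w (\<lambda>t. ennreal \<bar>f t\<bar>)"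
    then obtain C where "C > 0" and "\<forall>f :: real \<Rightarrow> real.
       (\<forall>t>0. 0 \<le> f t) \<and> (\<forall>s t. 0 < s \<longrightarrow> s \<le> t \<longrightarrow> f t \<le> f s) \<longrightarrow>
       wnorm p w (Qop f) \<le> ennreal C * wnorm p w (\<lambda>t. ennreal \<bar>f t\<bar>)" by blast
    then obtain q where "0 < q" "q < 1" "\<forall>r>0. V w (q*r) \<le> V w r / 2"
      using WT_H[OF w p] by blast
    then obtain d where "d > 0" "\<forall>s r. 0 < s \<longrightarrow> s \<le> r \<longrightarrow> V w s \<le> 2 * (s/r) powr d * V w r"
      using decay by blast
    then show "B_star_inf w" using D_B[OF w] by blast
  }
qed

end
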